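(* If $E\subseteq\mathbb{R}$ is a non-empty weakly nowhere dense $G_\delta$ set, then there exist points $x\in E$ which are neither left density points nor right density points of $E$.
   Context: $|A|$ denotes Lebesgue measure. A set $E\subseteq\mathbb{R}$ is weakly nowhere dense if for every (nondegenerate) interval $J$ the set $E\cap J$ does not have full measure in $J$. A point $x$ is a left (resp. right) density point of $E$ if for every sequence of intervals $I_n=[x-r_n,x]$ (resp. $I_n=[x,x+r_n]$) with $r_n\searrow0$ we have $|E\cap I_n|/|I_n|\to1$. *)

theory Defs
  imports "HOL-Analysis.Analysis"
begin

text \<open>It suffices (and is equivalent) to range over compact
  nondegenerate intervals [a,b]; "full measure" is |E \<inter> J| = |J|.\<close>
definition weakly_nowhere_dense :: "real set \<Rightarrow> bool" where
  "weakly_nowhere_dense E \<longleftrightarrow>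
     (\<forall>a b. a < b \<longrightarrow> measure lebesgue (E \<inter> {a..b}) \<noteq> measure lebesgue {a..b})"

definition left_density_point :: "real set \<Rightarrow> real \<Rightarrow> bool" where
  "left_density_point E x \<longleftrightarrow>
     (\<forall>r :: nat \<Rightarrow> real. (\<forall>n. r n > 0) \<and> decseq r \<and> r \<longlonglongrightarrow> 0 \<longrightarrow>
        (\<lambda>n. measure lebesgue (E \<inter> {x - r n..x}) / measure lebesgue {x - r n..x}) \<longlonglongrightarrow> 1)"

definition right_density_point :: "real set \<Rightarrow> real \<Rightarrow> bool" where
  "right_density_point E x \<longleftrightarrow>
     (\<forall>r :: nat \<Rightarrow> real. (\<forall>n. r n > 0) \<and> decseq r \<and> r \<longlonglongrightarrow> 0 \<longrightarrow>
        (\<lambda>n. measure lebesgue (E \<inter> {x..x + r n}) / measure lebesgue {x..x + r n}) \<longlonglongrightarrow> 1)"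

end

theory Submission
  imports Defs
begin

lemma ball_real_eq: "ball (z::real) d = {z-d<..<z+d}"
  by (simp add: ball_eq_greaterThanLessThan)

lemma measure_ball_real: "0 < d \<Longrightarrow> measure lebesgue (ball (z::real) d) = 2*d"
  by (simp add: ball_real_eq)

lemma L1:
  fixes S :: "real set"
  assumes S: "S \<in> sets lebesgue" and pos: "measure lebesgue (S \<inter> {a<..<b}) > 0"
  shows "\<exists>z d. d > 0 \<and> ball z d \<subseteq> {a<..<b} \<and>
           measure lebesgue (S \<inter> ball z d) > 7/8 * measure lebesgue (ball z d)"
proof (rule ccontr)
  assume "\<not> ?thesis"
  then have H: "\<And>z d. d > 0 \<Longrightarrow> ball z d \<subseteq> {a<..<b} \<Longrightarrow>
      measure lebesgue (S \<inter> ball z d) \<le> 7/8 * measure lebesgue (ball z d)"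
    by (meson not_less)
  define S' where "S' = S \<inter> {a<..<b}"
  have S'm: "S' \<in> lmeasurable"
    unfolding S'_def by (rule fmeasurableI2[of "{a<..<b}"]) (use S in auto)
  define m where "m = measure lebesgue S'"
  have m0: "m > 0" using pos by (simp add: m_def S'_def)
  obtain T where T: "open T" "S' \<subseteq> T" "(T - S') \<in> lmeasurable" "emeasure lebesgue (T - S') < ennreal (m/8)"
    using sets_lebesgue_outer_open[of S' "m/8"] S'm m0 by auto
  define G where "G = T \<inter> {a<..<b}"
  have Gopen: "open G" using T by (simp add: G_def open_Int)
  have S'G: "S' \<subseteq> G" using T by (auto simp: G_def S'_def)
  have Gm: "G \<in> lmeasurable"
    unfolding G_def by (rule fmeasurableI2[of "{a<..<b}"]) (use Gopen G_def in auto)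
  have "measure lebesgue (T - S') < m/8"
    using T(3,4) m0 by (simp add: emeasure_eq_measure2 ennreal_less_iff)
  moreover have "measure lebesgue G \<le> measure lebesgue S' + measure lebesgue (T - S')"
  proof -
    have "G \<subseteq> S' \<union> (T - S')" by (auto simp: G_def)
    moreover have U: "S' \<union> (T - S') \<in> lmeasurable"
      using S'm T(3) by (rule fmeasurable.Un)
    ultimately have "measure lebesgue G \<le> measure lebesgue (S' \<union> (T - S'))"
      using Gm by (intro measure_mono_fmeasurable) auto
    also have "\<dots> \<le> measure lebesgue S' + measure lebesgue (T - S')"
      using S'm T(3) by (intro measure_Un_le) auto
    finally show ?thesis .
  qed
  ultimately have Gle: "measure lebesgue G < 9/8 * m" by (simp add: m_def)
  define K where "K = {(z,d). d > 0 \<and> ball z d \<subseteq> G}"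
  have fine: "\<exists>i. i \<in> K \<and> x \<in> ball (fst i) (snd i) \<and> snd i < d" if "x \<in> S'" "0 < d" for x d
  proof -
    have "x \<in> G" using S'G that(1) by blast
    then obtain e where e: "e > 0" "ball x e \<subseteq> G" using Gopen open_contains_ball by meson
    have "ball x (min e d / 2) \<subseteq> ball x e" by (rule subset_ball) (use e in auto)
    then have "(x, min e d / 2) \<in> K" using e that by (simp add: K_def)
    moreover have "x \<in> ball x (min e d / 2)" "min e d / 2 < d" using e that by auto
    ultimately show ?thesis by force
  qed
  obtain C where C: "countable C" "C \<subseteq> K"
     "pairwise (\<lambda>i j. disjnt (ball (fst i) (snd i)) (ball (fst j) (snd j))) C"
     "negligible(S' - (\<Union>i \<in> C. ball (fst i) (snd i)))"
    by (rule Vitali_covering_theorem_balls[of S' K fst snd, OF fine]) blast+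
  define B where "B i = ball (fst i) (snd i)" for i :: "real \<times> real"
  have Bsets: "B i \<in> sets lebesgue" for i by (simp add: B_def)
  have disjB: "disjoint_family_on B C"
    using C(3) unfolding disjoint_family_on_def pairwise_def disjnt_def B_def by metis
  have disjSB: "disjoint_family_on (\<lambda>i. S \<inter> B i) C"
    using disjB unfolding disjoint_family_on_def by blast
  have BK: "snd i > 0 \<and> B i \<subseteq> G" if "i \<in> C" for i
  proof -
    have "i \<in> K" using C(2) that by blast
    then show ?thesis by (cases i) (simp add: K_def B_def)
  qed
  have each: "emeasure lebesgue (S \<inter> B i) \<le> ennreal (7/8) * emeasure lebesgue (B i)" if "i \<in> C" for i
  proof -
    have "B i \<subseteq> {a<..<b}" using BK[OF that] by (auto simp: G_def)
    then have le: "measure lebesgue (S \<inter> B i) \<le> 7/8 * measure lebesgue (B i)"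
      using H BK[OF that] unfolding B_def by auto
    have "S \<inter> B i \<in> lmeasurable"
      by (rule fmeasurableI2[of "B i"]) (use S in \<open>auto simp: B_def\<close>)
    moreover have "B i \<in> lmeasurable" by (simp add: B_def)
    ultimately show ?thesis using le
      by (simp add: emeasure_eq_measure2 ennreal_mult[symmetric])
  qed
  have "emeasure lebesgue (\<Union>i\<in>C. S \<inter> B i) = (\<integral>\<^sup>+i. emeasure lebesgue (S \<inter> B i) \<partial>count_space C)"
    by (rule emeasure_UN_countable) (use S C(1) disjSB Bsets in auto)
  also have "\<dots> \<le> (\<integral>\<^sup>+i. ennreal (7/8) * emeasure lebesgue (B i) \<partial>count_space C)"
    by (rule nn_integral_mono) (use each in auto)
  also have "\<dots> = ennreal (7/8) * (\<integral>\<^sup>+i. emeasure lebesgue (B i) \<partial>count_space C)"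
    by (rule nn_integral_cmult) auto
  also have "(\<integral>\<^sup>+i. emeasure lebesgue (B i) \<partial>count_space C) = emeasure lebesgue (\<Union>i\<in>C. B i)"
    by (rule emeasure_UN_countable[symmetric]) (use C(1) disjB Bsets in auto)
  also have "emeasure lebesgue (\<Union>i\<in>C. B i) \<le> emeasure lebesgue G"
    by (rule emeasure_mono) (use BK Gopen in auto)
  finally have A1: "emeasure lebesgue (\<Union>i\<in>C. S \<inter> B i) \<le> ennreal (7/8) * emeasure lebesgue G"
    by (simp add: mult_left_mono)
  have UB: "(\<Union>i\<in>C. B i) \<in> sets lebesgue"
    by (rule sets.countable_UN'') (use C(1) Bsets in auto)
  have USB: "(\<Union>i\<in>C. S \<inter> B i) \<in> sets lebesgue"
    by (rule sets.countable_UN'') (use C(1) Bsets S in auto)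
  have R: "S' - (\<Union>i \<in> C. B i) \<in> sets lebesgue"
    using S'm UB by auto
  have "S' \<subseteq> (\<Union>i\<in>C. S \<inter> B i) \<union> (S' - (\<Union>i \<in> C. B i))"
    by (auto simp: S'_def)
  then have "emeasure lebesgue S' \<le> emeasure lebesgue ((\<Union>i\<in>C. S \<inter> B i) \<union> (S' - (\<Union>i \<in> C. B i)))"
    by (rule emeasure_mono) (use USB R in blast)
  also have "\<dots> \<le> emeasure lebesgue (\<Union>i\<in>C. S \<inter> B i) + emeasure lebesgue (S' - (\<Union>i \<in> C. B i))"
    by (rule emeasure_subadditive) (use USB R in auto)
  also have "emeasure lebesgue (S' - (\<Union>i \<in> C. B i)) = 0"
    using C(4) unfolding B_def by (simp add: negligible_iff_null_sets null_setsD1)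
  finally have "emeasure lebesgue S' \<le> ennreal (7/8) * emeasure lebesgue G"
    using A1 by simp
  then have "m \<le> 7/8 * measure lebesgue G"
    using S'm Gm by (simp add: emeasure_eq_measure2 m_def ennreal_mult[symmetric])
  with Gle m0 show False by simp
qed

lemma ball_sub_real: "ball (z::real) d \<subseteq> {a<..<b} \<Longrightarrow> d > 0 \<Longrightarrow> a \<le> z - d \<and> z + d \<le> b"
  by (simp add: ball_eq_greaterThanLessThan subset_eq) (smt (verit) greaterThanLessThan_iff greaterThanLessThan_subseteq_greaterThanLessThan)

lemma sing_lmeas: "{x::real} \<in> lmeasurable"
  using lmeasurable_cbox[of x x] by simp

lemma sing_meas: "measure lebesgue {x::real} = 0"
  by auto

lemma compl_pos:
  fixes E :: "real set"
  assumes Em: "E \<in> sets lebesgue" and W: "weakly_nowhere_dense E" and ab: "a < b"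
  shows "measure lebesgue (- E \<inter> {a<..<b}) > 0"
proof -
  have "measure lebesgue (E \<inter> {a..b}) \<noteq> b - a" using W ab unfolding weakly_nowhere_dense_def by auto
  moreover have "measure lebesgue (E \<inter> {a..b}) \<le> b - a"
    using measure_mono_fmeasurable[of "E \<inter> {a..b}" "{a..b}" lebesgue] Em ab by auto
  ultimately have lt: "measure lebesgue (E \<inter> {a..b}) < b - a" by simp
  have "measure lebesgue (E \<inter> {a<..<b}) \<le> measure lebesgue (E \<inter> {a..b})"
  proof -
    have "E \<inter> {a..b} \<in> lmeasurable" by (rule fmeasurableI2[of "{a..b}"]) (use Em in auto)
    then show ?thesis by (rule measure_mono_fmeasurable[rotated 2]) (use Em in auto)
  qed
  moreover have "- E \<inter> {a<..<b} = {a<..<b} - (E \<inter> {a<..<b})" by auto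
  moreover have "measure lebesgue ({a<..<b} - (E \<inter> {a<..<b})) = (b - a) - measure lebesgue (E \<inter> {a<..<b})"
  proof -
    have "E \<inter> {a<..<b} \<in> lmeasurable" by (rule fmeasurableI2[of "{a<..<b}"]) (use Em in auto)
    then show ?thesis using measure_Diff[of lebesgue "{a<..<b}" "E \<inter> {a<..<b}"] ab by auto
  qed
  ultimately show ?thesis using lt by simp
qed

lemma L2:
  fixes E :: "real set"
  assumes Em: "E \<in> sets lebesgue" and W: "weakly_nowhere_dense E" and x0: "x0 \<in> E" and dl: "\<delta> > 0"
  shows "\<exists>y\<in>E. \<bar>y - x0\<bar> < \<delta> \<and> (\<exists>s. 0 < s \<and> s < \<delta> \<and> measure lebesgue (E \<inter> {y-s..y}) < s/2)"
proof -
  define a where "a = x0 - \<delta>/2"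
  have ax: "a < x0" using dl by (simp add: a_def)
  have CE: "- E \<in> sets lebesgue" using Em Compl_in_sets_lebesgue by blast
  obtain z d where zd: "d > 0" "ball z d \<subseteq> {a<..<x0}"
      "measure lebesgue (- E \<inter> ball z d) > 7/8 * measure lebesgue (ball z d)"
    using L1[OF CE compl_pos[OF Em W ax]] by blast
  have zb: "a \<le> z - d" "z + d \<le> x0" using ball_sub_real[OF zd(2,1)] by auto
  have mb: "measure lebesgue (ball z d) = 2 * d" using zd(1) by (simp add: ball_eq_greaterThanLessThan)
  have EBm: "E \<inter> ball z d \<in> lmeasurable" by (rule fmeasurableI2[of "ball z d"]) (use Em in auto)
  have "- E \<inter> ball z d = ball z d - (E \<inter> ball z d)" by auto
  moreover have "measure lebesgue (ball z d - (E \<inter> ball z d)) = 2*d - measure lebesgue (E \<inter> ball z d)"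
  proof -
    have bfin: "emeasure lebesgue (ball z d) \<noteq> \<infinity>"
      using lmeasurable_ball[of z d] by (simp add: fmeasurable_def)
    have "measure lebesgue (ball z d - (E \<inter> ball z d)) = measure lebesgue (ball z d) - measure lebesgue (E \<inter> ball z d)"
      by (rule measure_Diff[OF bfin]) (use Em in auto)
    then show ?thesis using mb by simp
  qed
  ultimately have EB: "measure lebesgue (E \<inter> ball z d) < d / 4" using zd(3) mb by simp
  define A where "A = E \<inter> {z..}"
  have x0A: "x0 \<in> A" using x0 zb zd(1) by (simp add: A_def)
  have bddA: "bdd_below A" unfolding A_def by (rule bdd_belowI[of _ z]) auto
  define m where "m = Inf A"
  have mz: "z \<le> m" unfolding m_def by (rule cInf_greatest) (use x0A A_def in auto)
  have mx: "m \<le> x0" unfolding m_def by (rule cInf_lower[OF x0A bddA])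
  obtain y where y: "y \<in> A" "y < m + d/4"
    using cInf_lessD[of A "m + d/4"] x0A zd(1) unfolding m_def by auto
  have my: "m \<le> y" unfolding m_def by (rule cInf_lower[OF y(1) bddA])
  define s where "s = y - (z - d)"
  have sub: "E \<inter> {z-d..y} \<subseteq> ({z-d} \<union> (E \<inter> ball z d)) \<union> {m..y}"
  proof
    fix x assume xx: "x \<in> E \<inter> {z-d..y}"
    show "x \<in> ({z-d} \<union> (E \<inter> ball z d)) \<union> {m..y}"
    proof (cases "x < z")
      case True
      then show ?thesis using xx by (cases "x = z - d") (auto simp: dist_real_def)
    next
      case False
      then have "x \<in> A" using xx by (auto simp: A_def)
      then have "m \<le> x" unfolding m_def by (rule cInf_lower[OF _ bddA])
      then show ?thesis using xx by auto
    qed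
  qed
  have m1: "({z-d} \<union> (E \<inter> ball z d)) \<in> lmeasurable" by (rule fmeasurable.Un) (use EBm sing_lmeas in auto)
  have i1: "measure lebesgue (E \<inter> {z-d..y}) \<le> measure lebesgue (({z-d} \<union> (E \<inter> ball z d)) \<union> {m..y})"
    by (rule measure_mono_fmeasurable[OF sub]) (use Em fmeasurable.Un[OF m1 lmeasurable_cbox[of m y, unfolded cbox_interval]] in auto)
  have i2: "measure lebesgue (({z-d} \<union> (E \<inter> ball z d)) \<union> {m..y}) \<le> measure lebesgue ({z-d} \<union> (E \<inter> ball z d)) + measure lebesgue {m..y}"
    by (rule measure_Un_le) (use m1 in auto)
  have i3: "measure lebesgue ({z-d} \<union> (E \<inter> ball z d)) \<le> measure lebesgue {z-d} + measure lebesgue (E \<inter> ball z d)"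
    by (rule measure_Un_le) (use EBm in auto)
  have i4: "measure lebesgue {m..y} = y - m" using my by simp
  have "measure lebesgue (E \<inter> {z-d..y}) < d/2"
    using i1 i2 i3 i4 EB y(2) sing_meas[of "z-d"] by linarith
  moreover have "y \<in> E" using y(1) by (simp add: A_def)
  moreover have "z \<le> y" using y(1) by (simp add: A_def)
  moreover have "d \<le> \<delta>/4" using zb by (simp add: a_def)
  moreover have "\<bar>y - x0\<bar> < \<delta>" "0 < s" "s < \<delta>"
    using y(2) mx zb zd(1) dl \<open>z \<le> y\<close> \<open>d \<le> \<delta>/4\<close> unfolding s_def a_def by linarith+
  ultimately show ?thesis
    by (intro bexI[of _ y] conjI exI[of _ s]) (auto simp: s_def)
qed

lemma L2R:
  fixes E :: "real set"
  assumes Em: "E \<in> sets lebesgue" and W: "weakly_nowhere_dense E" and x0: "x0 \<in> E" and dl: "\<delta> > 0"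
  shows "\<exists>y\<in>E. \<bar>y - x0\<bar> < \<delta> \<and> (\<exists>s. 0 < s \<and> s < \<delta> \<and> measure lebesgue (E \<inter> {y..y+s}) < s/2)"
proof -
  define a where "a = x0 + \<delta>/2"
  have ax: "x0 < a" using dl by (simp add: a_def)
  have CE: "- E \<in> sets lebesgue" using Em Compl_in_sets_lebesgue by blast
  obtain z d where zd: "d > 0" "ball z d \<subseteq> {x0<..<a}"
      "measure lebesgue (- E \<inter> ball z d) > 7/8 * measure lebesgue (ball z d)"
    using L1[OF CE compl_pos[OF Em W ax]] by blast
  have zb: "x0 \<le> z - d" "z + d \<le> a" using ball_sub_real[OF zd(2,1)] by auto
  have mb: "measure lebesgue (ball z d) = 2 * d" using zd(1) by (simp add: ball_eq_greaterThanLessThan)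
  have EBm: "E \<inter> ball z d \<in> lmeasurable" by (rule fmeasurableI2[of "ball z d"]) (use Em in auto)
  have "- E \<inter> ball z d = ball z d - (E \<inter> ball z d)" by auto
  moreover have "measure lebesgue (ball z d - (E \<inter> ball z d)) = 2*d - measure lebesgue (E \<inter> ball z d)"
  proof -
    have bfin: "emeasure lebesgue (ball z d) \<noteq> \<infinity>"
      using lmeasurable_ball[of z d] by (simp add: fmeasurable_def)
    have "measure lebesgue (ball z d - (E \<inter> ball z d)) = measure lebesgue (ball z d) - measure lebesgue (E \<inter> ball z d)"
      by (rule measure_Diff[OF bfin]) (use Em in auto)
    then show ?thesis using mb by simp
  qed
  ultimately have EB: "measure lebesgue (E \<inter> ball z d) < d / 4" using zd(3) mb by simp
  define A where "A = E \<inter> {..z}"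
  have x0A: "x0 \<in> A" using x0 zb zd(1) by (simp add: A_def)
  have bddA: "bdd_above A" unfolding A_def by (rule bdd_aboveI[of _ z]) auto
  define m where "m = Sup A"
  have mz: "m \<le> z" unfolding m_def by (rule cSup_least) (use x0A A_def in auto)
  have mx: "x0 \<le> m" unfolding m_def by (rule cSup_upper[OF x0A bddA])
  obtain y where y: "y \<in> A" "m - d/4 < y"
    using less_cSupD[of A "m - d/4"] x0A zd(1) unfolding m_def by auto
  have my: "y \<le> m" unfolding m_def by (rule cSup_upper[OF y(1) bddA])
  define s where "s = (z + d) - y"
  have sub: "E \<inter> {y..z+d} \<subseteq> ({z+d} \<union> (E \<inter> ball z d)) \<union> {y..m}"
  proof
    fix x assume xx: "x \<in> E \<inter> {y..z+d}"
    show "x \<in> ({z+d} \<union> (E \<inter> ball z d)) \<union> {y..m}"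
    proof (cases "z < x")
      case True
      then show ?thesis using xx by (cases "x = z + d") (auto simp: dist_real_def)
    next
      case False
      then have "x \<in> A" using xx by (auto simp: A_def)
      then have "x \<le> m" unfolding m_def by (rule cSup_upper[OF _ bddA])
      then show ?thesis using xx by auto
    qed
  qed
  have m1: "({z+d} \<union> (E \<inter> ball z d)) \<in> lmeasurable" by (rule fmeasurable.Un) (use EBm sing_lmeas in auto)
  have i1: "measure lebesgue (E \<inter> {y..z+d}) \<le> measure lebesgue (({z+d} \<union> (E \<inter> ball z d)) \<union> {y..m})"
    by (rule measure_mono_fmeasurable[OF sub]) (use Em fmeasurable.Un[OF m1 lmeasurable_cbox[of y m, unfolded cbox_interval]] in auto)
  have i2: "measure lebesgue (({z+d} \<union> (E \<inter> ball z d)) \<union> {y..m}) \<le> measure lebesgue ({z+d} \<union> (E \<inter> ball z d)) + measure lebesgue {y..m}"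
    by (rule measure_Un_le) (use m1 in auto)
  have i3: "measure lebesgue ({z+d} \<union> (E \<inter> ball z d)) \<le> measure lebesgue {z+d} + measure lebesgue (E \<inter> ball z d)"
    by (rule measure_Un_le) (use EBm in auto)
  have i4: "measure lebesgue {y..m} = m - y" using my by simp
  have "measure lebesgue (E \<inter> {y..z+d}) < d/2"
    using i1 i2 i3 i4 EB y(2) sing_meas[of "z+d"] by linarith
  moreover have "y \<in> E" using y(1) by (simp add: A_def)
  moreover have "y \<le> z" using y(1) by (simp add: A_def)
  moreover have "d \<le> \<delta>/4" using zb by (simp add: a_def)
  moreover have "\<bar>y - x0\<bar> < \<delta>" "0 < s" "s < \<delta>"
    using y(2) mx mz my zb zd(1) dl \<open>y \<le> z\<close> \<open>d \<le> \<delta>/4\<close> unfolding s_def a_def by linarith+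
  ultimately show ?thesis
    by (intro bexI[of _ y] conjI exI[of _ s]) (auto simp: s_def)
qed

lemma shift_bound:
  fixes E :: "real set"
  assumes Em: "E \<in> sets lebesgue" and h: "\<bar>p' - p\<bar> \<le> h" "\<bar>q' - q\<bar> \<le> h" and pq: "p \<le> q"
  shows "measure lebesgue (E \<inter> {p'..q'}) \<le> measure lebesgue (E \<inter> {p..q}) + 2*h"
proof -
  have h0: "0 \<le> h" using h by linarith
  have sub: "E \<inter> {p'..q'} \<subseteq> ((E \<inter> {p..q}) \<union> {p-h..p}) \<union> {q..q+h}"
    using h by auto
  have m1: "E \<inter> {p..q} \<in> lmeasurable" by (rule fmeasurableI2[of "{p..q}"]) (use Em in auto)
  have m2: "(E \<inter> {p..q}) \<union> {p-h..p} \<in> lmeasurable" by (rule fmeasurable.Un[OF m1]) simp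
  have m3: "((E \<inter> {p..q}) \<union> {p-h..p}) \<union> {q..q+h} \<in> lmeasurable" by (rule fmeasurable.Un[OF m2]) simp
  have i1: "measure lebesgue (E \<inter> {p'..q'}) \<le> measure lebesgue (((E \<inter> {p..q}) \<union> {p-h..p}) \<union> {q..q+h})"
    by (rule measure_mono_fmeasurable[OF sub]) (use Em m3 in auto)
  have i2: "measure lebesgue (((E \<inter> {p..q}) \<union> {p-h..p}) \<union> {q..q+h}) \<le> measure lebesgue ((E \<inter> {p..q}) \<union> {p-h..p}) + measure lebesgue {q..q+h}"
    by (rule measure_Un_le) (use m2 in auto)
  have i3: "measure lebesgue ((E \<inter> {p..q}) \<union> {p-h..p}) \<le> measure lebesgue (E \<inter> {p..q}) + measure lebesgue {p-h..p}"
    by (rule measure_Un_le) (use m1 in auto)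
  have "measure lebesgue {q..q+h} = h" "measure lebesgue {p-h..p} = h" using h0 by auto
  then show ?thesis using i1 i2 i3 by linarith
qed

definition LS :: "real set \<Rightarrow> real \<Rightarrow> real set" where
  "LS E \<eta> = {x. \<exists>s. 0 < s \<and> s < \<eta> \<and> measure lebesgue (E \<inter> {x-s..x}) < s/2}"

definition RS :: "real set \<Rightarrow> real \<Rightarrow> real set" where
  "RS E \<eta> = {x. \<exists>s. 0 < s \<and> s < \<eta> \<and> measure lebesgue (E \<inter> {x..x+s}) < s/2}"

lemma open_LS:
  assumes Em: "E \<in> sets lebesgue"
  shows "open (LS E \<eta>)"
  unfolding open_dist
proof
  fix x assume "x \<in> LS E \<eta>"
  then obtain s where s: "0 < s" "s < \<eta>" "measure lebesgue (E \<inter> {x-s..x}) < s/2"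
    by (auto simp: LS_def)
  define g where "g = (s/2 - measure lebesgue (E \<inter> {x-s..x})) / 2"
  have g0: "g > 0" using s by (simp add: g_def)
  show "\<exists>e>0. \<forall>y. dist y x < e \<longrightarrow> y \<in> LS E \<eta>"
  proof (intro exI[of _ g] conjI allI impI g0)
    fix y assume "dist y x < g"
    then have d: "\<bar>y - x\<bar> < g" by (simp add: dist_real_def)
    have "measure lebesgue (E \<inter> {y-s..y}) \<le> measure lebesgue (E \<inter> {x-s..x}) + 2*\<bar>y - x\<bar>"
      by (rule shift_bound[OF Em]) (use d s in auto)
    also have "\<dots> < s/2" using g_def d by simp
    finally show "y \<in> LS E \<eta>" using s unfolding LS_def by blast
  qed
qed

lemma open_RS:
  assumes Em: "E \<in> sets lebesgue"
  shows "open (RS E \<eta>)"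
  unfolding open_dist
proof
  fix x assume "x \<in> RS E \<eta>"
  then obtain s where s: "0 < s" "s < \<eta>" "measure lebesgue (E \<inter> {x..x+s}) < s/2"
    by (auto simp: RS_def)
  define g where "g = (s/2 - measure lebesgue (E \<inter> {x..x+s})) / 2"
  have g0: "g > 0" using s by (simp add: g_def)
  show "\<exists>e>0. \<forall>y. dist y x < e \<longrightarrow> y \<in> RS E \<eta>"
  proof (intro exI[of _ g] conjI allI impI g0)
    fix y assume "dist y x < g"
    then have d: "\<bar>y - x\<bar> < g" by (simp add: dist_real_def)
    have "measure lebesgue (E \<inter> {y..y+s}) \<le> measure lebesgue (E \<inter> {x..x+s}) + 2*\<bar>y - x\<bar>"
      by (rule shift_bound[OF Em]) (use d s in auto)
    also have "\<dots> < s/2" using g_def d by simp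
    finally show "y \<in> RS E \<eta>" using s unfolding RS_def by blast
  qed
qed

lemma not_density_gen:
  fixes F :: "real \<Rightarrow> real"
  assumes H: "\<And>n::nat. \<exists>s. 0 < s \<and> s < 1 / (real n + 1) \<and> F s < s/2"
  shows "\<exists>r::nat\<Rightarrow>real. (\<forall>n. r n > 0) \<and> decseq r \<and> r \<longlonglongrightarrow> 0 \<and> (\<forall>n. F (r n) < r n / 2)"
proof -
  let ?P = "\<lambda>n s. 0 < s \<and> s < 1 / (real n + 1) \<and> F s < s/2"
  have step: "\<exists>s'. ?P (Suc n) s' \<and> s' < s" if Pns: "?P n s" for n s
  proof -
    have "0 < s" using Pns by blast
    then obtain k where k: "inverse (real (Suc k)) < s" using reals_Archimedean[of s] by blast
    define k' where "k' = max k (Suc n)"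
    obtain s' where s': "?P k' s'" using H by blast
    have "1 / (real k' + 1) \<le> 1 / (real k + 1)"
      by (rule divide_left_mono) (auto simp: k'_def)
    moreover have "1 / (real k' + 1) \<le> 1 / (real (Suc n) + 1)"
      by (rule divide_left_mono) (auto simp: k'_def)
    ultimately show ?thesis using s' k
      by (intro exI[of _ s']) (auto simp: inverse_eq_divide add.commute)
  qed
  obtain r where r: "\<forall>n. ?P n (r n) \<and> r (Suc n) < r n"
    using dependent_nat_choice[of ?P "\<lambda>n x y. y < x"] H step by blast
  have dec: "decseq r" by (rule decseq_SucI) (use r in \<open>auto intro: less_imp_le\<close>)
  have "r \<longlonglongrightarrow> 0"
  proof (rule tendsto_sandwich[of "\<lambda>n. 0" _ _ "\<lambda>n. 1 / (real n + 1)"])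
    show "\<forall>\<^sub>F n in sequentially. 0 \<le> r n" using r by (intro always_eventually allI) (simp add: less_imp_le)
    show "\<forall>\<^sub>F n in sequentially. r n \<le> 1 / (real n + 1)" using r by (intro always_eventually allI) (simp add: less_imp_le)
    show "(\<lambda>n. 1 / (real n + 1)) \<longlonglongrightarrow> 0" using LIMSEQ_inverse_real_of_nat by (simp add: inverse_eq_divide add.commute)
  qed simp
  then show ?thesis using r dec by blast
qed

lemma not_left:
  assumes "\<And>n::nat. x \<in> LS E (1 / (real n + 1))"
  shows "\<not> left_density_point E x"
proof
  assume L: "left_density_point E x"
  obtain r where r: "\<forall>n. r n > 0" "decseq r" "r \<longlonglongrightarrow> 0" "\<forall>n. measure lebesgue (E \<inter> {x - r n..x}) < r n / 2"
    using not_density_gen[of "\<lambda>s. measure lebesgue (E \<inter> {x - s..x})"] assms unfolding LS_def by blast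
  have lim: "(\<lambda>n. measure lebesgue (E \<inter> {x - r n..x}) / measure lebesgue {x - r n..x}) \<longlonglongrightarrow> 1"
    using L r unfolding left_density_point_def by blast
  have "\<forall>n. measure lebesgue (E \<inter> {x - r n..x}) / measure lebesgue {x - r n..x} \<le> 1/2"
  proof
    fix n
    have "measure lebesgue {x - r n..x} = r n" using r(1) by (simp add: less_imp_le)
    then show "measure lebesgue (E \<inter> {x - r n..x}) / measure lebesgue {x - r n..x} \<le> 1/2"
      using r(1) r(4)[rule_format, of n] by (simp add: divide_le_eq)
  qed
  then have "(1::real) \<le> 1/2" using LIMSEQ_le_const2[OF lim] by blast
  then show False by simp
qed

lemma not_right:
  assumes "\<And>n::nat. x \<in> RS E (1 / (real n + 1))"
  shows "\<not> right_density_point E x"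
proof
  assume L: "right_density_point E x"
  obtain r where r: "\<forall>n. r n > 0" "decseq r" "r \<longlonglongrightarrow> 0" "\<forall>n. measure lebesgue (E \<inter> {x..x + r n}) < r n / 2"
    using not_density_gen[of "\<lambda>s. measure lebesgue (E \<inter> {x..x + s})"] assms unfolding RS_def by blast
  have lim: "(\<lambda>n. measure lebesgue (E \<inter> {x..x + r n}) / measure lebesgue {x..x + r n}) \<longlonglongrightarrow> 1"
    using L r unfolding right_density_point_def by blast
  have "\<forall>n. measure lebesgue (E \<inter> {x..x + r n}) / measure lebesgue {x..x + r n} \<le> 1/2"
  proof
    fix n
    have "measure lebesgue {x..x + r n} = r n" using r(1) by (simp add: less_imp_le)
    then show "measure lebesgue (E \<inter> {x..x + r n}) / measure lebesgue {x..x + r n} \<le> 1/2"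
      using r(1) r(4)[rule_format, of n] by (simp add: divide_le_eq)
  qed
  then have "(1::real) \<le> 1/2" using LIMSEQ_le_const2[OF lim] by blast
  then show False by simp
qed

lemma dense_LS:
  assumes Em: "E \<in> sets lebesgue" and W: "weakly_nowhere_dense E"
  shows "E \<subseteq> closure (E \<inter> LS E (1 / (real n + 1)))"
proof
  fix x0 assume x0: "x0 \<in> E"
  show "x0 \<in> closure (E \<inter> LS E (1 / (real n + 1)))"
    unfolding closure_approachable
  proof (intro allI impI)
    fix e :: real assume e: "e > 0"
    obtain y where y: "y \<in> E" "\<bar>y - x0\<bar> < min e (1 / (real n + 1))"
      and s: "\<exists>s. 0 < s \<and> s < min e (1 / (real n + 1)) \<and> measure lebesgue (E \<inter> {y-s..y}) < s/2"
      using L2[OF Em W x0, of "min e (1 / (real n + 1))"] e by auto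
    have "y \<in> LS E (1 / (real n + 1))" using s unfolding LS_def by auto
    then show "\<exists>y\<in>E \<inter> LS E (1 / (real n + 1)). dist y x0 < e"
      using y by (intro bexI[of _ y]) (auto simp: dist_real_def)
  qed
qed

lemma dense_RS:
  assumes Em: "E \<in> sets lebesgue" and W: "weakly_nowhere_dense E"
  shows "E \<subseteq> closure (E \<inter> RS E (1 / (real n + 1)))"
proof
  fix x0 assume x0: "x0 \<in> E"
  show "x0 \<in> closure (E \<inter> RS E (1 / (real n + 1)))"
    unfolding closure_approachable
  proof (intro allI impI)
    fix e :: real assume e: "e > 0"
    obtain y where y: "y \<in> E" "\<bar>y - x0\<bar> < min e (1 / (real n + 1))"
      and s: "\<exists>s. 0 < s \<and> s < min e (1 / (real n + 1)) \<and> measure lebesgue (E \<inter> {y..y+s}) < s/2"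
      using L2R[OF Em W x0, of "min e (1 / (real n + 1))"] e by auto
    have "y \<in> RS E (1 / (real n + 1))" using s unfolding RS_def by auto
    then show "\<exists>y\<in>E \<inter> RS E (1 / (real n + 1)). dist y x0 < e"
      using y by (intro bexI[of _ y]) (auto simp: dist_real_def)
  qed
qed

theorem corollary3p5:
  fixes E :: "real set"
  assumes "E \<noteq> {}"
    and "weakly_nowhere_dense E"
    and "gdelta_in euclidean E"
  shows "\<exists>x\<in>E. \<not> left_density_point E x \<and> \<not> right_density_point E x"
proof -
  note W = assms(2)
  obtain \<T> where T: "countable \<T>" "\<And>t. t \<in> \<T> \<Longrightarrow> open t" "\<Inter>\<T> = E"
    using assms(3) by (auto simp: gdelta_in_alt intersection_of_def)
  have Em: "E \<in> sets lebesgue"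
    using sets.countable_INT''[of lebesgue \<T> "\<lambda>t. t"] T by auto
  define C where "C = closure E"
  define L where "L n = LS E (1 / (real n + 1))" for n :: nat
  define R where "R n = RS E (1 / (real n + 1))" for n :: nat
  define \<G> where "\<G> = (\<lambda>t. C \<inter> t) ` \<T> \<union> range (\<lambda>n. C \<inter> L n) \<union> range (\<lambda>n. C \<inter> R n)"
  have cG: "countable \<G>" using T(1) by (simp add: \<G>_def)
  have EC: "E \<subseteq> C" by (simp add: C_def closure_subset)
  have ope: "openin (top_of_set C) G \<and> C \<subseteq> closure G" if GG: "G \<in> \<G>" for G
  proof -
    consider (a) t where "t \<in> \<T>" "G = C \<inter> t" | (b) n where "G = C \<inter> L n" | (c) n where "G = C \<inter> R n"
      using GG unfolding \<G>_def by blast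
    then show ?thesis
    proof cases
      case a
      have "E \<subseteq> C \<inter> t" using a(1) T(3) EC by blast
      then have "C \<subseteq> closure G" unfolding C_def a(2) by (rule closure_mono)
      then show ?thesis using a T(2) by (auto intro: openin_open_Int)
    next
      case b
      have "E \<subseteq> closure (E \<inter> L n)" unfolding L_def by (rule dense_LS[OF Em W])
      also have "closure (E \<inter> L n) \<subseteq> closure G" unfolding b using EC by (intro closure_mono) blast
      finally have "C \<subseteq> closure G" unfolding C_def by (simp add: closure_minimal)
      moreover have "open (L n)" unfolding L_def by (rule open_LS[OF Em])
      ultimately show ?thesis using b by (auto intro: openin_open_Int)
    next
      case c
      have "E \<subseteq> closure (E \<inter> R n)" unfolding R_def by (rule dense_RS[OF Em W])
      also have "closure (E \<inter> R n) \<subseteq> closure G" unfolding c using EC by (intro closure_mono) blast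
      finally have "C \<subseteq> closure G" unfolding C_def by (simp add: closure_minimal)
      moreover have "open (R n)" unfolding R_def by (rule open_RS[OF Em])
      ultimately show ?thesis using c by (auto intro: openin_open_Int)
    qed
  qed
  have "C \<subseteq> closure (\<Inter>\<G>)"
    by (rule Baire) (use cG ope in \<open>auto simp: C_def\<close>)
  moreover have "C \<noteq> {}" using assms(1) EC by blast
  ultimately have "\<Inter>\<G> \<noteq> {}" by auto
  then obtain x where x: "x \<in> \<Inter>\<G>" by blast
  have xE: "x \<in> E"
  proof -
    have "x \<in> t" if "t \<in> \<T>" for t using x that unfolding \<G>_def by blast
    then show ?thesis using T(3) by blast
  qed
  have xL: "x \<in> LS E (1 / (real n + 1))" for n using x unfolding \<G>_def L_def by blast
  have xR: "x \<in> RS E (1 / (real n + 1))" for n using x unfolding \<G>_def R_def by blast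
  show ?thesis using xE not_left[OF xL] not_right[OF xR] by blast
qed

end
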